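(* Let $N\ge1$, $h,\varepsilon\in(0,1)$, and let $\Phi$ be the opinion operator defined in the context. Let $P=(p_1,\dots,p_N)\in[-1,1]^N$ with $p_1\le\dots\le p_N$ be a fixed point of $\Phi$ that is not basic, i.e. not of the form $(-1,\dots,-1,1,\dots,1)$ (all entries in $\{-1,1\}$, allowing either block to be empty). Then either (i) every $p_k\in\{-1,0,1\}$, i.e. $P=(-1,\dots,-1,0,\dots,0,1,\dots,1)$; or (ii) there are indices $1\le a\le l<b\le m\le N$ such that $p_k=-1$ for $k<a$; $-\varepsilon<p_k<0$ for $a\le k\le l$; $p_k=0$ for $l<k<b$; $0<p_k<\varepsilon$ for $b\le k\le m$; $p_k=1$ for $k>m$; moreover $J(p_k)=\{a,a+1,\dots,m\}$ for every $k\in\{a,\dots,m\}$, and $p_a+p_{a+1}+\dots+p_m=0$.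
   Context: For $V=(v_1,\dots,v_N)\in[-1,1]^N$ and each $k$, let $J(v_k)=\{l\in\{1,\dots,N\}:|v_l-v_k|\le\varepsilon\}$ (computed within the array $V$) and $I(v_k)=|J(v_k)|$. Put $w_k(V)=v_k+\frac{h}{I(v_k)}\sum_{l\in J(v_k)}v_l$. Then $\Phi(V)=(v_1',\dots,v_N')$ where $v_k'=-1$ if $w_k<-1$, $v_k'=1$ if $w_k>1$, and $v_k'=w_k$ if $|w_k|\le1$. *)

theory Defs
  imports Complex_Main
begin

text \<open>Opinion vectors V = (v_1,...,v_N) are represented as functions nat => real,
  only the values at indices 1..N being relevant.\<close>

definition J :: "real \<Rightarrow> nat \<Rightarrow> (nat \<Rightarrow> real) \<Rightarrow> nat \<Rightarrow> nat set" where
  "J eps N v k = {l \<in> {1..N}. \<bar>v l - v k\<bar> \<le> eps}"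

definition I :: "real \<Rightarrow> nat \<Rightarrow> (nat \<Rightarrow> real) \<Rightarrow> nat \<Rightarrow> nat" where
  "I eps N v k = card (J eps N v k)"

definition w :: "real \<Rightarrow> real \<Rightarrow> nat \<Rightarrow> (nat \<Rightarrow> real) \<Rightarrow> nat \<Rightarrow> real" where
  "w h eps N v k = v k + h / real (I eps N v k) * (\<Sum>l\<in>J eps N v k. v l)"

definition Phi :: "real \<Rightarrow> real \<Rightarrow> nat \<Rightarrow> (nat \<Rightarrow> real) \<Rightarrow> nat \<Rightarrow> real" where
  "Phi h eps N v k = (if w h eps N v k < -1 then -1
                      else if w h eps N v k > 1 then 1
                      else w h eps N v k)"

end

theory Submission
  imports Defs
begin

lemma sum_neg_strict:
  fixes f :: "nat \<Rightarrow> real"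
  assumes "finite S" "k \<in> S" "f k < 0" "\<forall>l\<in>S. f l \<le> 0"
  shows "sum f S < 0"
proof -
  have "sum f S = f k + sum f (S - {k})" using assms by (simp add: sum.remove)
  moreover have "sum f (S - {k}) \<le> 0" using assms by (intro sum_nonpos) auto
  ultimately show ?thesis using assms by linarith
qed

lemma sum_pos_strict:
  fixes f :: "nat \<Rightarrow> real"
  assumes "finite S" "k \<in> S" "f k > 0" "\<forall>l\<in>S. f l \<ge> 0"
  shows "sum f S > 0"
proof -
  have "sum f S = f k + sum f (S - {k})" using assms by (simp add: sum.remove)
  moreover have "sum f (S - {k}) \<ge> 0" using assms by (intro sum_nonneg) auto
  ultimately show ?thesis using assms by linarith
qed

lemma fix_interior:
  assumes "0 < h" "k \<in> {1..N}" "\<bar>p k\<bar> < 1" "Phi h eps N p k = p k" "0 \<le> eps"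
  shows "sum p (J eps N p k) = 0"
proof -
  have kin: "k \<in> J eps N p k" using assms by (simp add: J_def)
  have fin: "finite (J eps N p k)" by (simp add: J_def)
  have "card (J eps N p k) > 0" using kin fin by (auto simp: card_gt_0_iff)
  then have Ipos: "real (I eps N p k) > 0" unfolding I_def by simp
  have "w h eps N p k = p k"
    using assms(3,4) unfolding Phi_def by (auto split: if_splits)
  then have "h / real (I eps N p k) * sum p (J eps N p k) = 0" unfolding w_def by simp
  then show ?thesis using assms(1) Ipos by simp
qed

theorem theorem2:
  fixes N :: nat and h eps :: real and p :: "nat \<Rightarrow> real"
  assumes "N \<ge> 1"
    and "0 < h" "h < 1" "0 < eps" "eps < 1"
    and "\<forall>k\<in>{1..N}. -1 \<le> p k \<and> p k \<le> 1"
    and "\<forall>k\<in>{1..N}. \<forall>k'\<in>{1..N}. k \<le> k' \<longrightarrow> p k \<le> p k'"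
    and "\<forall>k\<in>{1..N}. Phi h eps N p k = p k"
    and "\<not> (\<exists>c\<le>N. (\<forall>k\<in>{1..c}. p k = -1) \<and> (\<forall>k\<in>{c<..N}. p k = 1))"
  shows "(\<forall>k\<in>{1..N}. p k \<in> {-1, 0, 1}) \<or>
         (\<exists>a l b m. 1 \<le> a \<and> a \<le> l \<and> l < b \<and> b \<le> m \<and> m \<le> N \<and>
            (\<forall>k\<in>{1..<a}. p k = -1) \<and>
            (\<forall>k\<in>{a..l}. -eps < p k \<and> p k < 0) \<and>
            (\<forall>k\<in>{l<..<b}. p k = 0) \<and>
            (\<forall>k\<in>{b..m}. 0 < p k \<and> p k < eps) \<and>
            (\<forall>k\<in>{m<..N}. p k = 1) \<and>
            (\<forall>k\<in>{a..m}. J eps N p k = {a..m}) \<and>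
            (\<Sum>k=a..m. p k) = 0)"
proof -
  define V where "V = {1..N}"
  define M where "M = {k\<in>V. \<bar>p k\<bar> < 1}"
  have bnd: "\<And>k. k \<in> V \<Longrightarrow> -1 \<le> p k \<and> p k \<le> 1" using assms(6) V_def by auto
  have mono: "\<And>k k'. k \<in> V \<Longrightarrow> k' \<in> V \<Longrightarrow> k \<le> k' \<Longrightarrow> p k \<le> p k'"
    using assms(7) V_def by auto
  have Sz: "\<And>k. k \<in> M \<Longrightarrow> sum p (J eps N p k) = 0"
    using fix_interior assms(2,4,8) unfolding M_def V_def by force
  have Jd: "\<And>k. J eps N p k = {l\<in>V. \<bar>p l - p k\<bar> \<le> eps}" by (simp add: J_def V_def)
  have nonint: "\<And>l. l \<in> V \<Longrightarrow> l \<notin> M \<Longrightarrow> p l = -1 \<or> p l = 1"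
    using bnd unfolding M_def by force
  have finV: "finite V" by (simp add: V_def)
  have finM: "finite M" by (simp add: M_def V_def)
  have MV: "M \<subseteq> V" by (auto simp: M_def)
  have finJ: "\<And>k. finite (J eps N p k)" using finV by (simp add: Jd)
  have inJ: "\<And>k. k \<in> V \<Longrightarrow> k \<in> J eps N p k" using assms(4) by (simp add: Jd)
  show ?thesis
  proof (cases "\<forall>k\<in>M. p k = 0")
    case True
    have "\<forall>k\<in>{1..N}. p k \<in> {-1,0,1}"
    proof
      fix k assume "k \<in> {1..N}"
      then have "k \<in> V" by (simp add: V_def)
      then show "p k \<in> {-1,0,1}" using True nonint by (cases "k \<in> M") auto
    qed
    then show ?thesis by blast
  next
    case False
    then have Mne: "M \<noteq> {}" by auto
    define x where "x = Min (p ` M)"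
    define y where "y = Max (p ` M)"
    have "x \<in> p ` M" using Min_in finM Mne x_def by auto
    then obtain a0 where a0: "a0 \<in> M" "p a0 = x" by auto
    have "y \<in> p ` M" using Max_in finM Mne y_def by auto
    then obtain m0 where m0: "m0 \<in> M" "p m0 = y" by auto
    have xle: "\<And>k. k \<in> M \<Longrightarrow> x \<le> p k" using finM x_def by auto
    have yge: "\<And>k. k \<in> M \<Longrightarrow> p k \<le> y" using finM y_def by auto
    have a0V: "a0 \<in> V" and m0V: "m0 \<in> V" using a0 m0 MV by auto
    have xint: "\<bar>x\<bar> < 1" and yint: "\<bar>y\<bar> < 1" using a0 m0 by (auto simp: M_def)
    have xy: "x < 0 \<or> y > 0"
    proof -
      obtain k where "k \<in> M" "p k \<noteq> 0" using False by auto
      then show ?thesis using xle[of k] yge[of k] by linarith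
    qed
    have ypos: "y > 0"
    proof (rule ccontr)
      assume ny: "\<not> y > 0"
      then have x0: "x < 0" using xy by auto
      have "sum p (J eps N p a0) < 0"
      proof (rule sum_neg_strict[OF finJ inJ[OF a0V]])
        show "p a0 < 0" using a0 x0 by simp
        show "\<forall>l\<in>J eps N p a0. p l \<le> 0"
        proof
          fix l assume l: "l \<in> J eps N p a0"
          then have lV: "l \<in> V" and d: "\<bar>p l - x\<bar> \<le> eps" using a0 by (auto simp: Jd)
          show "p l \<le> 0"
          proof (cases "l \<in> M")
            case True then show ?thesis using yge[of l] ny by linarith
          next
            case False
            then have "p l = -1 \<or> p l = 1" using nonint lV by auto
            then show ?thesis using d x0 assms(5) by auto
          qed
        qed
      qed
      with Sz a0 show False by simp
    qed
    define Z where "Z = {l\<in>M. p l \<ge> y - eps}"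
    define z where "z = Min (p ` Z)"
    have finZ: "finite Z" using finM by (simp add: Z_def)
    have "m0 \<in> Z" using m0 assms(4) by (simp add: Z_def)
    then have Zne: "Z \<noteq> {}" by auto
    have "z \<in> p ` Z" using Min_in finZ Zne z_def by auto
    then obtain al where al: "al \<in> Z" "p al = z" by auto
    have alM: "al \<in> M" and alV: "al \<in> V" using al MV by (auto simp: Z_def)
    have zle: "\<And>l. l \<in> Z \<Longrightarrow> z \<le> p l" using finZ z_def by auto
    have zge: "z \<ge> y - eps" using al by (simp add: Z_def)
    have zy: "z \<le> y" using yge alM al by auto
    have gap: "\<And>l. l \<in> V \<Longrightarrow> p l \<ge> y - eps \<Longrightarrow> p l \<ge> z"
    proof -
      fix l assume lV: "l \<in> V" and h: "p l \<ge> y - eps"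
      show "p l \<ge> z"
      proof (cases "l \<in> M")
        case True then show ?thesis using zle h by (simp add: Z_def)
      next
        case False
        then have "p l = -1 \<or> p l = 1" using nonint lV by auto
        then show ?thesis using h ypos assms(5) zy yint by auto
      qed
    qed
    have zneg: "z < 0"
    proof (rule ccontr)
      assume "\<not> z < 0"
      have "sum p (J eps N p m0) > 0"
      proof (rule sum_pos_strict[OF finJ inJ[OF m0V]])
        show "p m0 > 0" using m0 ypos by simp
        show "\<forall>l\<in>J eps N p m0. p l \<ge> 0"
        proof
          fix l assume "l \<in> J eps N p m0"
          then have "l \<in> V" "p l \<ge> y - eps" using m0 by (auto simp: Jd)
          then show "p l \<ge> 0" using gap \<open>\<not> z < 0\<close> by force
        qed
      qed
      with Sz m0 show False by simp
    qed
    define A where "A = {l\<in>V. z - eps \<le> p l \<and> p l < z}"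
    define B where "B = {l\<in>V. z \<le> p l \<and> p l \<le> z + eps}"
    define C where "C = {l\<in>V. z + eps < p l \<and> p l \<le> y + eps}"
    have finA: "finite A" and finB: "finite B" and finC: "finite C"
      using finV by (auto simp: A_def B_def C_def)
    have Jal: "J eps N p al = A \<union> B" using al by (auto simp: Jd A_def B_def)
    have Jm0: "J eps N p m0 = B \<union> C"
    proof
      show "J eps N p m0 \<subseteq> B \<union> C"
      proof
        fix l assume "l \<in> J eps N p m0"
        then have "l \<in> V" "\<bar>p l - y\<bar> \<le> eps" using m0 by (auto simp: Jd)
        moreover have "p l \<ge> z" using gap calculation by auto
        ultimately show "l \<in> B \<union> C" by (auto simp: B_def C_def)
      qed
    next
      show "B \<union> C \<subseteq> J eps N p m0"
        using m0 zge zy by (auto simp: Jd B_def C_def)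
    qed
    have C1: "\<And>l. l \<in> C \<Longrightarrow> p l = 1"
    proof -
      fix l assume l: "l \<in> C"
      then have lV: "l \<in> V" and gt: "p l > z + eps" by (auto simp: C_def)
      have "l \<notin> M" using yge[of l] gt zge by linarith
      then have "p l = -1 \<or> p l = 1" using nonint lV by auto
      then show "p l = 1" using gt zge ypos by auto
    qed
    have sC: "sum p C = real (card C)" using C1 by simp
    have "sum p (J eps N p al) = sum p A + sum p B"
      unfolding Jal by (rule sum.union_disjoint[OF finA finB]) (auto simp: A_def B_def)
    then have e1: "sum p A + sum p B = 0" using Sz alM by simp
    have "sum p (J eps N p m0) = sum p B + sum p C"
      unfolding Jm0 by (rule sum.union_disjoint[OF finB finC]) (auto simp: B_def C_def)
    then have e2: "sum p B + real (card C) = 0" using Sz m0 sC by simp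
    have Ae: "A = {}"
    proof (rule ccontr)
      assume "A \<noteq> {}"
      then obtain k where k: "k \<in> A" by auto
      have "sum p A < 0"
        by (rule sum_neg_strict[OF finA k]) (use k zneg in \<open>auto simp: A_def\<close>)
      then show False using e1 e2 by simp
    qed
    have Ce: "C = {}" using e1 e2 Ae finC by simp
    have xz: "x = z"
    proof (rule ccontr)
      assume "x \<noteq> z"
      then have xlt: "x < z" using xle alM al by force
      have "a0 \<notin> A" using Ae by auto
      then have xfar: "x < z - eps" using a0 a0V xlt by (auto simp: A_def)
      have "sum p (J eps N p a0) < 0"
      proof (rule sum_neg_strict[OF finJ inJ[OF a0V]])
        show "p a0 < 0" using a0 xlt zneg by simp
        show "\<forall>l\<in>J eps N p a0. p l \<le> 0" using a0 xfar zneg by (auto simp: Jd)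
      qed
      with Sz a0 show False by simp
    qed
    have xneg: "x < 0" using xz zneg by simp
    have yx: "y - x \<le> eps" using xz zge by simp
    have noneg: "\<And>l. l \<in> V \<Longrightarrow> \<not> (x - eps \<le> p l \<and> p l < x)" using Ae xz by (auto simp: A_def)
    have nopos: "\<And>l. l \<in> V \<Longrightarrow> \<not> (x + eps < p l \<and> p l \<le> y + eps)" using Ce xz by (auto simp: C_def)
    have JM: "\<And>k. k \<in> M \<Longrightarrow> J eps N p k = M"
    proof
      fix k assume k: "k \<in> M"
      have pk: "x \<le> p k" "p k \<le> y" using xle yge k by auto
      show "J eps N p k \<subseteq> M"
      proof
        fix l assume "l \<in> J eps N p k"
        then have lV: "l \<in> V" and d: "\<bar>p l - p k\<bar> \<le> eps" by (auto simp: Jd)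
        show "l \<in> M"
        proof (rule ccontr)
          assume "l \<notin> M"
          then have "p l = -1 \<or> p l = 1" using nonint lV by auto
          then show False
            using noneg[OF lV] nopos[OF lV] d pk xneg ypos assms(5) xint yint by auto
        qed
      qed
      show "M \<subseteq> J eps N p k"
        using pk xle yge yx MV by (force simp: Jd)
    qed
    have sumM: "sum p M = 0" using Sz[OF a0(1)] JM[OF a0(1)] by simp
    define a where "a = Min M"
    define m where "m = Max M"
    have aM: "a \<in> M" and mM: "m \<in> M" using finM Mne a_def m_def by auto
    have aV: "a \<in> V" and mV: "m \<in> V" using aM mM MV by auto
    have Mint: "M = {a..m}"
    proof
      show "M \<subseteq> {a..m}" using finM a_def m_def by auto
      show "{a..m} \<subseteq> M"
      proof
        fix k assume k: "k \<in> {a..m}"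
        then have kV: "k \<in> V" using aV mV by (auto simp: V_def)
        have "p a \<le> p k" "p k \<le> p m" using mono k kV aV mV by auto
        moreover have "\<bar>p a\<bar> < 1" "\<bar>p m\<bar> < 1" using aM mM by (auto simp: M_def)
        ultimately show "k \<in> M" using kV by (auto simp: M_def)
      qed
    qed
    define Ln where "Ln = {k\<in>M. p k < 0}"
    define Lp where "Lp = {k\<in>M. p k > 0}"
    define l where "l = Max Ln"
    define b where "b = Min Lp"
    have finLn: "finite Ln" and finLp: "finite Lp" using finM by (auto simp: Ln_def Lp_def)
    have "a0 \<in> Ln" using a0 xneg by (simp add: Ln_def)
    then have Lnne: "Ln \<noteq> {}" by auto
    have "m0 \<in> Lp" using m0 ypos by (simp add: Lp_def)
    then have Lpne: "Lp \<noteq> {}" by auto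
    have lLn: "l \<in> Ln" using finLn Lnne l_def by auto
    have bLp: "b \<in> Lp" using finLp Lpne b_def by auto
    have lmax: "\<And>k. k \<in> Ln \<Longrightarrow> k \<le> l" using finLn l_def by auto
    have bmin: "\<And>k. k \<in> Lp \<Longrightarrow> b \<le> k" using finLp b_def by auto
    have lM: "l \<in> M" and bM: "b \<in> M" using lLn bLp by (auto simp: Ln_def Lp_def)
    have pl: "p l < 0" and pb: "p b > 0" using lLn bLp by (auto simp: Ln_def Lp_def)
    have lb: "l < b"
    proof (rule ccontr)
      assume "\<not> l < b"
      then have "p b \<le> p l" using mono[of b l] lM bM MV by auto
      then show False using pl pb by simp
    qed
    have rng: "\<And>k. k \<in> M \<Longrightarrow> -eps < p k \<and> p k < eps"
      using xle yge yx xneg ypos by (smt (verit))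
    have a1: "1 \<le> a" using aV by (simp add: V_def)
    have mN: "m \<le> N" using mV by (simp add: V_def)
    have al': "a \<le> l" and bm: "b \<le> m" using lM bM Mint by auto
    have P1: "\<forall>k\<in>{1..<a}. p k = -1"
    proof
      fix k assume k: "k \<in> {1..<a}"
      then have kV: "k \<in> V" using mN aV by (auto simp: V_def)
      have "k \<notin> M" using k Mint by auto
      then have "p k = -1 \<or> p k = 1" using nonint kV by auto
      moreover have "p k \<le> p a" using mono kV aV k by auto
      moreover have "p a < 1" using aM by (auto simp: M_def)
      ultimately show "p k = -1" by auto
    qed
    have P5: "\<forall>k\<in>{m<..N}. p k = 1"
    proof
      fix k assume k: "k \<in> {m<..N}"
      then have kV: "k \<in> V" using a1 aV by (auto simp: V_def)
      have "k \<notin> M" using k Mint by auto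
      then have "p k = -1 \<or> p k = 1" using nonint kV by auto
      moreover have "p m \<le> p k" using mono kV mV k by auto
      moreover have "p m > -1" using mM by (auto simp: M_def)
      ultimately show "p k = 1" by auto
    qed
    have P2: "\<forall>k\<in>{a..l}. -eps < p k \<and> p k < 0"
    proof
      fix k assume k: "k \<in> {a..l}"
      then have kM: "k \<in> M" using Mint lM by auto
      have "p k \<le> p l" using mono kM lM MV k by auto
      then show "-eps < p k \<and> p k < 0" using rng[OF kM] pl by simp
    qed
    have P4: "\<forall>k\<in>{b..m}. 0 < p k \<and> p k < eps"
    proof
      fix k assume k: "k \<in> {b..m}"
      then have kM: "k \<in> M" using Mint bM by auto
      have "p b \<le> p k" using mono kM bM MV k by auto
      then show "0 < p k \<and> p k < eps" using rng[OF kM] pb by simp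
    qed
    have P3: "\<forall>k\<in>{l<..<b}. p k = 0"
    proof
      fix k assume k: "k \<in> {l<..<b}"
      then have kM: "k \<in> M" using Mint lM bM by auto
      have "k \<notin> Ln" using lmax k by force
      moreover have "k \<notin> Lp" using bmin k by force
      ultimately show "p k = 0" using kM by (auto simp: Ln_def Lp_def)
    qed
    have P6: "\<forall>k\<in>{a..m}. J eps N p k = {a..m}" using JM Mint by auto
    have P7: "(\<Sum>k=a..m. p k) = 0" using sumM Mint by simp
    show ?thesis
      using a1 al' lb bm mN P1 P2 P3 P4 P5 P6 P7 by blast
  qed
qed

end
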